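(* For all $X,Y\in\mathcal C$, the set $H=\{\Delta\in\mathrm{Bunch}\mid\forall\Delta'\in X.\ (\Delta\mathbin{;}\Delta')\in Y\}$ belongs to $\mathcal C$ and is the Heyting implication of $X$ and $Y$ in $\mathcal C$: for every $Z\in\mathcal C$, $Z\cap X\subseteq Y$ if and only if $Z\subseteq H$.
   Context: Formulas of BI: $\varphi,\psi ::= \top \mid \bot \mid \varphi\wedge\psi \mid \varphi\vee\psi \mid \varphi\to\psi \mid \mathsf{emp} \mid \varphi\ast\psi \mid \varphi -\!\!\ast\, \psi \mid a$, $a\in\mathrm{Atom}$. Bunches are finite binary trees whose leaves are formulas or empty bunches $\varnothing_m,\varnothing_a$ and whose internal nodes are labelled by the multiplicative comma ($\Delta_1\mathbin{,}\Delta_2$) or the additive semicolon ($\Delta_1\mathbin{;}\Delta_2$). A bunched context $\Delta(-)$ is a bunch with one leaf replaced by a hole; $\Delta(\Gamma)$ fills it with $\Gamma$. Bunch equivalence $\equiv$ is the least equivalence relation making $\mathbin{,}$ commutative, associative with unit $\varnothing_m$, $\mathbin{;}$ commutative, associative with unit $\varnothing_a$, and closed under contexts; $\mathrm{Bunch}$ is the set of bunches modulo $\equiv$. The cut-free BI sequent calculus ($\Delta\vdash_{\mathsf{cf}}\varphi$) has the rules: (ax) $a\vdash a$ for atoms $a$; (equiv) from $\Delta'\vdash\varphi$, $\Delta\equiv\Delta'$ infer $\Delta\vdash\varphi$; (W;) from $\Delta(\Delta_1)\vdash\varphi$ infer $\Delta(\Delta_1\mathbin{;}\Delta_2)\vdash\varphi$;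 (C;) from $\Delta(\Delta_1\mathbin{;}\Delta_1)\vdash\varphi$ infer $\Delta(\Delta_1)\vdash\varphi$; (empR) $\varnothing_m\vdash\mathsf{emp}$; (empL) from $\Delta(\varnothing_m)\vdash\varphi$ infer $\Delta(\mathsf{emp})\vdash\varphi$; ($\ast$R) from $\Delta_1\vdash\varphi$, $\Delta_2\vdash\psi$ infer $\Delta_1\mathbin{,}\Delta_2\vdash\varphi\ast\psi$; ($\ast$L) from $\Delta(\varphi\mathbin{,}\psi)\vdash\chi$ infer $\Delta(\varphi\ast\psi)\vdash\chi$; ($-\!\ast$R) from $\Delta\mathbin{,}\varphi\vdash\psi$ infer $\Delta\vdash\varphi-\!\!\ast\,\psi$; ($-\!\ast$L) from $\Delta_1\vdash\varphi$, $\Delta(\Delta_2\mathbin{,}\psi)\vdash\chi$ infer $\Delta((\Delta_1\mathbin{,}\Delta_2)\mathbin{,}(\varphi-\!\!\ast\,\psi))\vdash\chi$; ($\top$R) $\varnothing_a\vdash\top$; ($\top$L) from $\Delta(\varnothing_a)\vdash\varphi$ infer $\Delta(\top)\vdash\varphi$; ($\wedge$R) from $\Delta_1\vdash\varphi$, $\Delta_2\vdash\psi$ infer $\Delta_1\mathbin{;}\Delta_2\vdash\varphi\wedge\psi$; ($\wedge$L) from $\Delta(\varphi\mathbin{;}\psi)\vdash\chi$ infer $\Delta(\varphi\wedge\psi)\vdash\chi$; ($\to$R) from $\Delta\mathbin{;}\varphi\vdash\psi$ infer $\Delta\vdash\varphi\to\psi$; ($\to$L) from $\Delta_1\vdash\varphi$,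 $\Delta(\Delta_2\mathbin{;}\psi)\vdash\chi$ infer $\Delta((\Delta_1\mathbin{;}\Delta_2)\mathbin{;}(\varphi\to\psi))\vdash\chi$; ($\bot$L) $\Delta(\bot)\vdash\varphi$; ($\vee$R1/2) from $\Delta\vdash\varphi$ (resp. $\Delta\vdash\psi$) infer $\Delta\vdash\varphi\vee\psi$; ($\vee$L) from $\Delta(\varphi)\vdash\chi$, $\Delta(\psi)\vdash\chi$ infer $\Delta(\varphi\vee\psi)\vdash\chi$. (No cut rule.) For a formula $\varphi$, $[\![\varphi]\!]^{\mathrm{out}}=\{\Delta\in\mathrm{Bunch}\mid\Delta\vdash_{\mathsf{cf}}\varphi\}$. For $X\subseteq\mathrm{Bunch}$, $\mathrm{cl}(X)=\bigcap\{[\![\varphi]\!]^{\mathrm{out}}\mid X\subseteq[\![\varphi]\!]^{\mathrm{out}}\}$, and $\mathcal C=\{X\subseteq\mathrm{Bunch}\mid X=\mathrm{cl}(X)\}$. *)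

theory Defs
  imports Main
begin

datatype 'a fm =
    FTop | FBot | FAnd "'a fm" "'a fm" | FOr "'a fm" "'a fm" | FImp "'a fm" "'a fm"
  | FEmp | FStar "'a fm" "'a fm" | FWand "'a fm" "'a fm" | FAtom 'a

datatype 'a rbunch =
    BForm "'a fm"
  | EmpM
  | EmpA
  | BComma "'a rbunch" "'a rbunch"
  | BSemi "'a rbunch" "'a rbunch"

datatype 'a bctx =
    Hole
  | CCommaL "'a bctx" "'a rbunch"
  | CCommaR "'a rbunch" "'a bctx"
  | CSemiL "'a bctx" "'a rbunch"
  | CSemiR "'a rbunch" "'a bctx"

fun fill :: "'a bctx \<Rightarrow> 'a rbunch \<Rightarrow> 'a rbunch" where
  "fill Hole G = G"
| "fill (CCommaL C D) G = BComma (fill C G) D"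
| "fill (CCommaR D C) G = BComma D (fill C G)"
| "fill (CSemiL C D) G = BSemi (fill C G) D"
| "fill (CSemiR D C) G = BSemi D (fill C G)"

inductive beq :: "'a rbunch \<Rightarrow> 'a rbunch \<Rightarrow> bool" where
  beq_refl: "beq D D"
| beq_sym: "beq D E \<Longrightarrow> beq E D"
| beq_trans: "beq D E \<Longrightarrow> beq E F \<Longrightarrow> beq D F"
| comma_comm: "beq (BComma D E) (BComma E D)"
| comma_assoc: "beq (BComma (BComma D E) F) (BComma D (BComma E F))"
| comma_unit: "beq (BComma D EmpM) D"
| semi_comm: "beq (BSemi D E) (BSemi E D)"
| semi_assoc: "beq (BSemi (BSemi D E) F) (BSemi D (BSemi E F))"
| semi_unit: "beq (BSemi D EmpA) D"
| beq_ctx: "beq D E \<Longrightarrow> beq (fill C D) (fill C E)"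

lemma beq_equivp: "equivp beq"
  by (intro equivpI reflpI sympI transpI) (auto intro: beq.intros)

inductive cf :: "'a rbunch \<Rightarrow> 'a fm \<Rightarrow> bool" where
  ax: "cf (BForm (FAtom a)) (FAtom a)"
| equiv: "cf D' p \<Longrightarrow> beq D D' \<Longrightarrow> cf D p"
| weakS: "cf (fill C D1) p \<Longrightarrow> cf (fill C (BSemi D1 D2)) p"
| contrS: "cf (fill C (BSemi D1 D1)) p \<Longrightarrow> cf (fill C D1) p"
| empR: "cf EmpM FEmp"
| empL: "cf (fill C EmpM) p \<Longrightarrow> cf (fill C (BForm FEmp)) p"
| starR: "cf D1 p \<Longrightarrow> cf D2 q \<Longrightarrow> cf (BComma D1 D2) (FStar p q)"
| starL: "cf (fill C (BComma (BForm p) (BForm q))) r \<Longrightarrow> cf (fill C (BForm (FStar p q))) r"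
| wandR: "cf (BComma D (BForm p)) q \<Longrightarrow> cf D (FWand p q)"
| wandL: "cf D1 p \<Longrightarrow> cf (fill C (BComma D2 (BForm q))) r \<Longrightarrow>
           cf (fill C (BComma (BComma D1 D2) (BForm (FWand p q)))) r"
| topR: "cf EmpA FTop"
| topL: "cf (fill C EmpA) p \<Longrightarrow> cf (fill C (BForm FTop)) p"
| andR: "cf D1 p \<Longrightarrow> cf D2 q \<Longrightarrow> cf (BSemi D1 D2) (FAnd p q)"
| andL: "cf (fill C (BSemi (BForm p) (BForm q))) r \<Longrightarrow> cf (fill C (BForm (FAnd p q))) r"
| impR: "cf (BSemi D (BForm p)) q \<Longrightarrow> cf D (FImp p q)"
| impL: "cf D1 p \<Longrightarrow> cf (fill C (BSemi D2 (BForm q))) r \<Longrightarrow>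
           cf (fill C (BSemi (BSemi D1 D2) (BForm (FImp p q)))) r"
| botL: "cf (fill C (BForm FBot)) p"
| orR1: "cf D p \<Longrightarrow> cf D (FOr p q)"
| orR2: "cf D q \<Longrightarrow> cf D (FOr p q)"
| orL: "cf (fill C (BForm p)) r \<Longrightarrow> cf (fill C (BForm q)) r \<Longrightarrow> cf (fill C (BForm (FOr p q))) r"

quotient_type 'a bunch = "'a rbunch" / beq
  by (rule beq_equivp)

lift_definition semi :: "'a bunch \<Rightarrow> 'a bunch \<Rightarrow> 'a bunch" is BSemi
proof -
  fix a b c d :: "'a rbunch"
  assume ab: "beq a b" and cd: "beq c d"
  have "beq (fill (CSemiL Hole c) a) (fill (CSemiL Hole c) b)" using ab by (rule beq_ctx)
  moreover have "beq (fill (CSemiR b Hole) c) (fill (CSemiR b Hole) d)" using cd by (rule beq_ctx)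
  ultimately show "beq (BSemi a c) (BSemi b d)" by (auto intro: beq_trans)
qed

lift_definition derivable :: "'a bunch \<Rightarrow> 'a fm \<Rightarrow> bool" is cf
  by (auto intro: cf.equiv beq_sym)

definition out :: "'a fm \<Rightarrow> 'a bunch set" where
  "out p = {D. derivable D p}"

definition cl :: "'a bunch set \<Rightarrow> 'a bunch set" where
  "cl X = \<Inter> {out p | p. X \<subseteq> out p}"

definition closed_sets :: "'a bunch set set" where
  "closed_sets = {X. X = cl X}"

end

theory Submission
  imports Defs
begin

fun tr :: "'a rbunch \<Rightarrow> 'a fm" where
  "tr (BForm f) = f"
| "tr EmpM = FEmp"
| "tr EmpA = FTop"
| "tr (BComma a b) = FStar (tr a) (tr b)"
| "tr (BSemi a b) = FAnd (tr a) (tr b)"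

fun ccomp :: "'a bctx \<Rightarrow> 'a bctx \<Rightarrow> 'a bctx" where
  "ccomp Hole C = C"
| "ccomp (CCommaL K D) C = CCommaL (ccomp K C) D"
| "ccomp (CCommaR D K) C = CCommaR D (ccomp K C)"
| "ccomp (CSemiL K D) C = CSemiL (ccomp K C) D"
| "ccomp (CSemiR D K) C = CSemiR D (ccomp K C)"

lemma fill_ccomp[simp]: "fill (ccomp K C) E = fill K (fill C E)"
  by (induction K) auto

lemma fold_tr: "cf (fill C G) r \<Longrightarrow> cf (fill C (BForm (tr G))) r"
proof (induction G arbitrary: C)
  case (BForm x)
  then show ?case by simp
next
  case EmpM
  then show ?case using cf.empL by fastforce
next
  case EmpA
  then show ?case using cf.topL by fastforce
next
  case (BComma G1 G2)
  have "cf (fill (ccomp C (CCommaL Hole G2)) G1) r" using BComma.prems by simp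
  hence "cf (fill (ccomp C (CCommaL Hole G2)) (BForm (tr G1))) r" by (rule BComma.IH(1))
  hence "cf (fill (ccomp C (CCommaR (BForm (tr G1)) Hole)) G2) r" by simp
  hence "cf (fill (ccomp C (CCommaR (BForm (tr G1)) Hole)) (BForm (tr G2))) r" by (rule BComma.IH(2))
  hence "cf (fill C (BComma (BForm (tr G1)) (BForm (tr G2)))) r" by simp
  thus ?case using cf.starL by fastforce
next
  case (BSemi G1 G2)
  have "cf (fill (ccomp C (CSemiL Hole G2)) G1) r" using BSemi.prems by simp
  hence "cf (fill (ccomp C (CSemiL Hole G2)) (BForm (tr G1))) r" by (rule BSemi.IH(1))
  hence "cf (fill (ccomp C (CSemiR (BForm (tr G1)) Hole)) G2) r" by simp
  hence "cf (fill (ccomp C (CSemiR (BForm (tr G1)) Hole)) (BForm (tr G2))) r" by (rule BSemi.IH(2))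
  hence "cf (fill C (BSemi (BForm (tr G1)) (BForm (tr G2)))) r" by simp
  thus ?case using cf.andL by fastforce
qed

lemma impR_inv: "cf D s \<Longrightarrow> s = FImp p q \<Longrightarrow> cf (BSemi D (BForm p)) q"
proof (induction D s arbitrary: p q rule: cf.induct)
  case (equiv D' s D)
  have "beq (fill (CSemiL Hole (BForm p)) D) (fill (CSemiL Hole (BForm p)) D')"
    using equiv by (intro beq_ctx)
  moreover have "cf (BSemi D' (BForm p)) q" using equiv by simp
  ultimately show ?case using cf.equiv by simp
next
  case (weakS C D1 s D2)
  have "cf (fill (CSemiL C (BForm p)) D1) q" using weakS by simp
  from cf.weakS[OF this, of D2] show ?case by simp
next
  case (contrS C D1 s)
  have "cf (fill (CSemiL C (BForm p)) (BSemi D1 D1)) q" using contrS by simp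
  from cf.contrS[OF this] show ?case by simp
next
  case (empL C s)
  have "cf (fill (CSemiL C (BForm p)) EmpM) q" using empL by simp
  from cf.empL[OF this] show ?case by simp
next
  case (starL C a b s)
  have "cf (fill (CSemiL C (BForm p)) (BComma (BForm a) (BForm b))) q" using starL by simp
  from cf.starL[OF this] show ?case by simp
next
  case (wandL D1 a C D2 b s)
  have "cf (fill (CSemiL C (BForm p)) (BComma D2 (BForm b))) q" using wandL by simp
  from cf.wandL[OF wandL(1) this] show ?case by simp
next
  case (topL C s)
  have "cf (fill (CSemiL C (BForm p)) EmpA) q" using topL by simp
  from cf.topL[OF this] show ?case by simp
next
  case (andL C a b s)
  have "cf (fill (CSemiL C (BForm p)) (BSemi (BForm a) (BForm b))) q" using andL by simp
  from cf.andL[OF this] show ?case by simp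
next
  case (impR D a b)
  then show ?case by simp
next
  case (impL D1 a C D2 b s)
  have "cf (fill (CSemiL C (BForm p)) (BSemi D2 (BForm b))) q" using impL by simp
  from cf.impL[OF impL(1) this] show ?case by simp
next
  case (botL C s)
  from cf.botL[of "CSemiL C (BForm p)"] show ?case by simp
next
  case (orL C a s b)
  have "cf (fill (CSemiL C (BForm p)) (BForm a)) q" using orL by simp
  moreover have "cf (fill (CSemiL C (BForm p)) (BForm b)) q" using orL by simp
  ultimately have "cf (fill (CSemiL C (BForm p)) (BForm (FOr a b))) q" by (rule cf.orL)
  then show ?case by simp
qed (simp_all only: fm.distinct)

definition sl :: "'a fm \<Rightarrow> 'a rbunch \<Rightarrow> 'a fm \<Rightarrow> 'a rbunch" where
  "sl f G h = (if h = f then G else BForm h)"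

fun sb :: "'a fm \<Rightarrow> 'a rbunch \<Rightarrow> 'a rbunch \<Rightarrow> 'a rbunch" where
  "sb f G (BForm h) = sl f G h"
| "sb f G EmpM = EmpM"
| "sb f G EmpA = EmpA"
| "sb f G (BComma a b) = BComma (sb f G a) (sb f G b)"
| "sb f G (BSemi a b) = BSemi (sb f G a) (sb f G b)"

fun sc :: "'a fm \<Rightarrow> 'a rbunch \<Rightarrow> 'a bctx \<Rightarrow> 'a bctx" where
  "sc f G Hole = Hole"
| "sc f G (CCommaL C D) = CCommaL (sc f G C) (sb f G D)"
| "sc f G (CCommaR D C) = CCommaR (sb f G D) (sc f G C)"
| "sc f G (CSemiL C D) = CSemiL (sc f G C) (sb f G D)"
| "sc f G (CSemiR D C) = CSemiR (sb f G D) (sc f G C)"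

lemma sb_fill[simp]: "sb f G (fill C D) = fill (sc f G C) (sb f G D)"
  by (induction C) auto

lemma beq_sb: "beq D E \<Longrightarrow> beq (sb f G D) (sb f G E)"
proof (induction rule: beq.induct)
  case (beq_ctx D E C)
  then show ?case by (simp add: beq.beq_ctx)
qed (auto intro: beq.intros)

definition foldp :: "'a fm \<Rightarrow> 'a rbunch \<Rightarrow> bool" where
  "foldp f G = (\<forall>C r. cf (fill C G) r \<longrightarrow> cf (fill C (BForm f)) r)"

lemma fold_leaf: "foldp f G \<Longrightarrow> cf (fill C (sl f G h)) r \<Longrightarrow> cf (fill C (BForm h)) r"
  unfolding foldp_def sl_def by (auto split: if_splits)

lemma foldB: "foldp f G \<Longrightarrow> cf (fill C (sb f G D)) r \<Longrightarrow> cf (fill C D) r"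
proof (induction D arbitrary: C)
  case (BForm x)
  then show ?case using fold_leaf by fastforce
next
  case (BComma D1 D2)
  have "cf (fill (ccomp C (CCommaL Hole (sb f G D2))) (sb f G D1)) r" using BComma.prems by simp
  hence "cf (fill (ccomp C (CCommaL Hole (sb f G D2))) D1) r" using BComma.IH(1) BComma.prems(1) by blast
  hence "cf (fill (ccomp C (CCommaR D1 Hole)) (sb f G D2)) r" by simp
  hence "cf (fill (ccomp C (CCommaR D1 Hole)) D2) r" using BComma.IH(2) BComma.prems(1) by blast
  thus ?case by simp
next
  case (BSemi D1 D2)
  have "cf (fill (ccomp C (CSemiL Hole (sb f G D2))) (sb f G D1)) r" using BSemi.prems by simp
  hence "cf (fill (ccomp C (CSemiL Hole (sb f G D2))) D1) r" using BSemi.IH(1) BSemi.prems(1) by blast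
  hence "cf (fill (ccomp C (CSemiR D1 Hole)) (sb f G D2)) r" by simp
  hence "cf (fill (ccomp C (CSemiR D1 Hole)) D2) r" using BSemi.IH(2) BSemi.prems(1) by blast
  thus ?case by simp
qed auto

lemma foldC: "foldp f G \<Longrightarrow> cf (fill K (fill (sc f G C) E)) r \<Longrightarrow> cf (fill K (fill C E)) r"
proof (induction C arbitrary: K)
  case Hole
  then show ?case by simp
next
  case (CCommaL C D)
  have "cf (fill (ccomp K (CCommaR (fill (sc f G C) E) Hole)) (sb f G D)) r" using CCommaL.prems by simp
  hence "cf (fill (ccomp K (CCommaR (fill (sc f G C) E) Hole)) D) r" using foldB CCommaL.prems(1) by blast
  hence "cf (fill (ccomp K (CCommaL Hole D)) (fill (sc f G C) E)) r" by simp
  hence "cf (fill (ccomp K (CCommaL Hole D)) (fill C E)) r" using CCommaL.IH CCommaL.prems(1) by blast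
  thus ?case by simp
next
  case (CCommaR D C)
  have "cf (fill (ccomp K (CCommaL Hole (fill (sc f G C) E))) (sb f G D)) r" using CCommaR.prems by simp
  hence "cf (fill (ccomp K (CCommaL Hole (fill (sc f G C) E))) D) r" using foldB CCommaR.prems(1) by blast
  hence "cf (fill (ccomp K (CCommaR D Hole)) (fill (sc f G C) E)) r" by simp
  hence "cf (fill (ccomp K (CCommaR D Hole)) (fill C E)) r" using CCommaR.IH CCommaR.prems(1) by blast
  thus ?case by simp
next
  case (CSemiL C D)
  have "cf (fill (ccomp K (CSemiR (fill (sc f G C) E) Hole)) (sb f G D)) r" using CSemiL.prems by simp
  hence "cf (fill (ccomp K (CSemiR (fill (sc f G C) E) Hole)) D) r" using foldB CSemiL.prems(1) by blast
  hence "cf (fill (ccomp K (CSemiL Hole D)) (fill (sc f G C) E)) r" by simp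
  hence "cf (fill (ccomp K (CSemiL Hole D)) (fill C E)) r" using CSemiL.IH CSemiL.prems(1) by blast
  thus ?case by simp
next
  case (CSemiR D C)
  have "cf (fill (ccomp K (CSemiL Hole (fill (sc f G C) E))) (sb f G D)) r" using CSemiR.prems by simp
  hence "cf (fill (ccomp K (CSemiL Hole (fill (sc f G C) E))) D) r" using foldB CSemiR.prems(1) by blast
  hence "cf (fill (ccomp K (CSemiR D Hole)) (fill (sc f G C) E)) r" by simp
  hence "cf (fill (ccomp K (CSemiR D Hole)) (fill C E)) r" using CSemiR.IH CSemiR.prems(1) by blast
  thus ?case by simp
qed

definition inv_pair :: "'a fm \<Rightarrow> 'a rbunch \<Rightarrow> bool" where
  "inv_pair f G = ((\<exists>p q. f = FAnd p q \<and> G = BSemi (BForm p) (BForm q))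
     \<or> (\<exists>p q. f = FStar p q \<and> G = BComma (BForm p) (BForm q))
     \<or> (f = FEmp \<and> G = EmpM) \<or> (f = FTop \<and> G = EmpA))"

lemma inv_pair_foldp: "inv_pair f G \<Longrightarrow> foldp f G"
  unfolding inv_pair_def foldp_def using cf.andL cf.starL cf.empL cf.topL by blast

lemma inv_main: "cf B r \<Longrightarrow> inv_pair f G \<Longrightarrow> cf (sb f G B) r"
proof (induction rule: cf.induct)
  case (ax a)
  then show ?case by (auto simp: inv_pair_def sl_def intro: cf.ax)
next
  case (equiv D' p D)
  then show ?case using beq_sb cf.equiv by blast
next
  case (weakS C D1 p D2)
  then show ?case using cf.weakS by fastforce
next
  case (contrS C D1 p)
  then show ?case using cf.contrS by fastforce
next
  case empR
  then show ?case by (simp add: cf.empR)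
next
  case (empL C p)
  then show ?case
    by (cases "f = FEmp") (auto simp: sl_def inv_pair_def intro: cf.empL)
next
  case (starR D1 p D2 q)
  then show ?case by (simp add: cf.starR)
next
  case (starL C p q r)
  have fp: "foldp f G" using starL.prems by (rule inv_pair_foldp)
  have "cf (fill (sc f G C) (BComma (sl f G p) (sl f G q))) r" using starL by simp
  hence "cf (fill (ccomp (sc f G C) (CCommaL Hole (sl f G q))) (sl f G p)) r" by simp
  hence "cf (fill (ccomp (sc f G C) (CCommaL Hole (sl f G q))) (BForm p)) r" using fold_leaf[OF fp] by blast
  hence "cf (fill (ccomp (sc f G C) (CCommaR (BForm p) Hole)) (sl f G q)) r" by simp
  hence "cf (fill (ccomp (sc f G C) (CCommaR (BForm p) Hole)) (BForm q)) r" using fold_leaf[OF fp] by blast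
  hence 1: "cf (fill (sc f G C) (BComma (BForm p) (BForm q))) r" by simp
  show ?case
  proof (cases "FStar p q = f")
    case True
    then have "G = BComma (BForm p) (BForm q)" using starL.prems by (auto simp: inv_pair_def)
    then show ?thesis using 1 True by (simp add: sl_def)
  next
    case False
    then show ?thesis using 1 cf.starL by (fastforce simp: sl_def)
  qed
next
  case (wandR D p q)
  have fp: "foldp f G" using wandR.prems by (rule inv_pair_foldp)
  have "cf (fill (CCommaR (sb f G D) Hole) (sl f G p)) q" using wandR by simp
  hence "cf (fill (CCommaR (sb f G D) Hole) (BForm p)) q" using fold_leaf[OF fp] by blast
  then show ?case by (simp add: cf.wandR)
next
  case (wandL D1 p C D2 q r)
  have fp: "foldp f G" using wandL.prems by (rule inv_pair_foldp)
  have "cf (fill (sc f G C) (BComma (sb f G D2) (sl f G q))) r" using wandL by simp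
  hence "cf (fill (ccomp (sc f G C) (CCommaR (sb f G D2) Hole)) (sl f G q)) r" by simp
  hence "cf (fill (ccomp (sc f G C) (CCommaR (sb f G D2) Hole)) (BForm q)) r" using fold_leaf[OF fp] by blast
  hence "cf (fill (sc f G C) (BComma (BComma (sb f G D1) (sb f G D2)) (BForm (FWand p q)))) r"
    using cf.wandL wandL by simp
  moreover have "FWand p q \<noteq> f" using wandL.prems by (auto simp: inv_pair_def)
  ultimately show ?case by (simp add: sl_def)
next
  case topR
  then show ?case by (simp add: cf.topR)
next
  case (topL C p)
  then show ?case
    by (cases "f = FTop") (auto simp: sl_def inv_pair_def intro: cf.topL)
next
  case (andR D1 p D2 q)
  then show ?case by (simp add: cf.andR)
next
  case (andL C p q r)
  have fp: "foldp f G" using andL.prems by (rule inv_pair_foldp)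
  have "cf (fill (sc f G C) (BSemi (sl f G p) (sl f G q))) r" using andL by simp
  hence "cf (fill (ccomp (sc f G C) (CSemiL Hole (sl f G q))) (sl f G p)) r" by simp
  hence "cf (fill (ccomp (sc f G C) (CSemiL Hole (sl f G q))) (BForm p)) r" using fold_leaf[OF fp] by blast
  hence "cf (fill (ccomp (sc f G C) (CSemiR (BForm p) Hole)) (sl f G q)) r" by simp
  hence "cf (fill (ccomp (sc f G C) (CSemiR (BForm p) Hole)) (BForm q)) r" using fold_leaf[OF fp] by blast
  hence 1: "cf (fill (sc f G C) (BSemi (BForm p) (BForm q))) r" by simp
  show ?case
  proof (cases "FAnd p q = f")
    case True
    then have "G = BSemi (BForm p) (BForm q)" using andL.prems by (auto simp: inv_pair_def)
    then show ?thesis using 1 True by (simp add: sl_def)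
  next
    case False
    then show ?thesis using 1 cf.andL by (fastforce simp: sl_def)
  qed
next
  case (impR D p q)
  have fp: "foldp f G" using impR.prems by (rule inv_pair_foldp)
  have "cf (fill (CSemiR (sb f G D) Hole) (sl f G p)) q" using impR by simp
  hence "cf (fill (CSemiR (sb f G D) Hole) (BForm p)) q" using fold_leaf[OF fp] by blast
  then show ?case by (simp add: cf.impR)
next
  case (impL D1 p C D2 q r)
  have fp: "foldp f G" using impL.prems by (rule inv_pair_foldp)
  have "cf (fill (sc f G C) (BSemi (sb f G D2) (sl f G q))) r" using impL by simp
  hence "cf (fill (ccomp (sc f G C) (CSemiR (sb f G D2) Hole)) (sl f G q)) r" by simp
  hence "cf (fill (ccomp (sc f G C) (CSemiR (sb f G D2) Hole)) (BForm q)) r" using fold_leaf[OF fp] by blast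
  hence "cf (fill (sc f G C) (BSemi (BSemi (sb f G D1) (sb f G D2)) (BForm (FImp p q)))) r"
    using cf.impL impL by simp
  moreover have "FImp p q \<noteq> f" using impL.prems by (auto simp: inv_pair_def)
  ultimately show ?case by (simp add: sl_def)
next
  case (botL C p)
  have "FBot \<noteq> f" using botL.prems by (auto simp: inv_pair_def)
  then show ?case using cf.botL by (fastforce simp: sl_def)
next
  case (orR1 D p q)
  then show ?case by (simp add: cf.orR1)
next
  case (orR2 D q p)
  then show ?case by (simp add: cf.orR2)
next
  case (orL C p r q)
  have fp: "foldp f G" using orL.prems by (rule inv_pair_foldp)
  have "cf (fill (sc f G C) (BForm p)) r" using orL fold_leaf[OF fp] by simp
  moreover have "cf (fill (sc f G C) (BForm q)) r" using orL fold_leaf[OF fp] by simp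
  ultimately have "cf (fill (sc f G C) (BForm (FOr p q))) r" by (rule cf.orL)
  moreover have "FOr p q \<noteq> f" using orL.prems by (auto simp: inv_pair_def)
  ultimately show ?case by (simp add: sl_def)
qed

lemma inv_ctx: "cf (fill C (BForm f)) r \<Longrightarrow> inv_pair f G \<Longrightarrow> cf (fill (sc f G C) G) r"
  using inv_main[of "fill C (BForm f)" r f G] by (simp add: sl_def)

lemma unfold_tr: "cf (fill C (BForm (tr G))) r \<Longrightarrow> cf (fill C G) r"
proof (induction G arbitrary: C)
  case (BForm x)
  then show ?case by simp
next
  case EmpM
  have ip: "inv_pair FEmp (EmpM :: 'a rbunch)" by (simp add: inv_pair_def)
  have "cf (fill Hole (fill (sc FEmp EmpM C) EmpM)) r" using inv_ctx[OF _ ip] EmpM by simp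
  then show ?case using foldC[OF inv_pair_foldp[OF ip], of Hole C EmpM] by simp
next
  case EmpA
  have ip: "inv_pair FTop (EmpA :: 'a rbunch)" by (simp add: inv_pair_def)
  have "cf (fill Hole (fill (sc FTop EmpA C) EmpA)) r" using inv_ctx[OF _ ip] EmpA by simp
  then show ?case using foldC[OF inv_pair_foldp[OF ip], of Hole C EmpA] by simp
next
  case (BComma G1 G2)
  let ?f = "FStar (tr G1) (tr G2)" and ?G = "BComma (BForm (tr G1)) (BForm (tr G2))"
  have ip: "inv_pair ?f ?G" by (simp add: inv_pair_def)
  have "cf (fill (sc ?f ?G C) ?G) r" using inv_ctx[OF _ ip] BComma.prems by simp
  hence "cf (fill (ccomp (sc ?f ?G C) (CCommaL Hole (BForm (tr G2)))) (BForm (tr G1))) r" by simp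
  hence "cf (fill (ccomp (sc ?f ?G C) (CCommaL Hole (BForm (tr G2)))) G1) r" by (rule BComma.IH(1))
  hence "cf (fill (ccomp (sc ?f ?G C) (CCommaR G1 Hole)) (BForm (tr G2))) r" by simp
  hence "cf (fill (ccomp (sc ?f ?G C) (CCommaR G1 Hole)) G2) r" by (rule BComma.IH(2))
  hence "cf (fill Hole (fill (sc ?f ?G C) (BComma G1 G2))) r" by simp
  then show ?case using foldC[OF inv_pair_foldp[OF ip], of Hole C] by simp
next
  case (BSemi G1 G2)
  let ?f = "FAnd (tr G1) (tr G2)" and ?G = "BSemi (BForm (tr G1)) (BForm (tr G2))"
  have ip: "inv_pair ?f ?G" by (simp add: inv_pair_def)
  have "cf (fill (sc ?f ?G C) ?G) r" using inv_ctx[OF _ ip] BSemi.prems by simp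
  hence "cf (fill (ccomp (sc ?f ?G C) (CSemiL Hole (BForm (tr G2)))) (BForm (tr G1))) r" by simp
  hence "cf (fill (ccomp (sc ?f ?G C) (CSemiL Hole (BForm (tr G2)))) G1) r" by (rule BSemi.IH(1))
  hence "cf (fill (ccomp (sc ?f ?G C) (CSemiR G1 Hole)) (BForm (tr G2))) r" by simp
  hence "cf (fill (ccomp (sc ?f ?G C) (CSemiR G1 Hole)) G2) r" by (rule BSemi.IH(2))
  hence "cf (fill Hole (fill (sc ?f ?G C) (BSemi G1 G2))) r" by simp
  then show ?case using foldC[OF inv_pair_foldp[OF ip], of Hole C] by simp
qed

lemma abs_ex: "\<exists>d. D = abs_bunch d"
  by (induction D rule: bunch.abs_induct) auto

lemma closedD: "X \<in> closed_sets \<Longrightarrow> D \<in> X \<longleftrightarrow> (\<forall>p. X \<subseteq> out p \<longrightarrow> derivable D p)"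
  unfolding closed_sets_def cl_def out_def by blast

lemma cl_sup: "X \<subseteq> cl X"
  unfolding cl_def by blast

theorem proposition6p5:
  fixes X Y :: "'a bunch set"
  assumes "X \<in> closed_sets" and "Y \<in> closed_sets"
  defines "H \<equiv> {D. \<forall>D'\<in>X. semi D D' \<in> Y}"
  shows "H \<in> closed_sets \<and> (\<forall>Z\<in>closed_sets. Z \<inter> X \<subseteq> Y \<longleftrightarrow> Z \<subseteq> H)"
proof (intro conjI ballI)
  have "cl H \<subseteq> H"
  proof
    fix D assume D: "D \<in> cl H"
    show "D \<in> H" unfolding H_def
    proof (intro CollectI ballI)
      fix D' assume D': "D' \<in> X"
      obtain d where d: "D = abs_bunch d" using abs_ex by blast
      obtain d' where d': "D' = abs_bunch d'" using abs_ex by blast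
      show "semi D D' \<in> Y"
      proof (subst closedD[OF assms(2)], intro allI impI)
        fix q assume Yq: "Y \<subseteq> out q"
        have "H \<subseteq> out (FImp (tr d') q)"
        proof
          fix E assume E: "E \<in> H"
          obtain e where e: "E = abs_bunch e" using abs_ex by blast
          have "semi E D' \<in> Y" using E D' H_def by auto
          hence "cf (BSemi e d') q" using Yq by (auto simp: out_def d' e semi.abs_eq derivable.abs_eq)
          hence "cf (BSemi e (BForm (tr d'))) q" using fold_tr[of "CSemiR e Hole" d'] by simp
          thus "E \<in> out (FImp (tr d') q)"
            by (auto simp: out_def e derivable.abs_eq intro: cf.impR)
        qed
        hence "D \<in> out (FImp (tr d') q)" using D unfolding cl_def by blast
        hence "cf d (FImp (tr d') q)" by (simp add: out_def d derivable.abs_eq)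
        hence "cf (BSemi d (BForm (tr d'))) q" using impR_inv by blast
        hence "cf (BSemi d d') q" using unfold_tr[of "CSemiR d Hole" d' q] by simp
        thus "derivable (semi D D') q" by (simp add: d d' semi.abs_eq derivable.abs_eq)
      qed
    qed
  qed
  thus "H \<in> closed_sets" using cl_sup unfolding closed_sets_def by blast
next
  fix Z :: "'a bunch set" assume Z: "Z \<in> closed_sets"
  show "Z \<inter> X \<subseteq> Y \<longleftrightarrow> Z \<subseteq> H"
  proof
    assume ZXY: "Z \<inter> X \<subseteq> Y"
    show "Z \<subseteq> H" unfolding H_def
    proof (intro subsetI CollectI ballI)
      fix D D' assume D: "D \<in> Z" and D': "D' \<in> X"
      obtain d where d: "D = abs_bunch d" using abs_ex by blast
      obtain d' where d': "D' = abs_bunch d'" using abs_ex by blast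
      have "semi D D' \<in> Z"
      proof (subst closedD[OF Z], intro allI impI)
        fix p assume "Z \<subseteq> out p"
        hence "cf d p" using D by (auto simp: out_def d derivable.abs_eq)
        hence "cf (BSemi d d') p" using cf.weakS[of Hole d p d'] by simp
        thus "derivable (semi D D') p" by (simp add: d d' semi.abs_eq derivable.abs_eq)
      qed
      moreover have "semi D D' \<in> X"
      proof (subst closedD[OF assms(1)], intro allI impI)
        fix p assume "X \<subseteq> out p"
        hence "cf d' p" using D' by (auto simp: out_def d' derivable.abs_eq)
        hence "cf (BSemi d' d) p" using cf.weakS[of Hole d' p d] by simp
        hence "cf (BSemi d d') p" using cf.equiv beq.semi_comm by blast
        thus "derivable (semi D D') p" by (simp add: d d' semi.abs_eq derivable.abs_eq)
      qed
      ultimately show "semi D D' \<in> Y" using ZXY by blast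
    qed
  next
    assume ZH: "Z \<subseteq> H"
    show "Z \<inter> X \<subseteq> Y"
    proof
      fix D assume D: "D \<in> Z \<inter> X"
      obtain d where d: "D = abs_bunch d" using abs_ex by blast
      have "semi D D \<in> Y" using D ZH H_def by blast
      show "D \<in> Y"
      proof (subst closedD[OF assms(2)], intro allI impI)
        fix q assume "Y \<subseteq> out q"
        hence "cf (BSemi d d) q" using \<open>semi D D \<in> Y\<close>
          by (auto simp: out_def d semi.abs_eq derivable.abs_eq)
        hence "cf d q" using cf.contrS[of Hole d q] by simp
        thus "derivable D q" by (simp add: d derivable.abs_eq)
      qed
    qed
  qed
qed

end
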